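(* Let $A$ be an $n\times n$ binary matrix with zero diagonal and $\widetilde A=A+I_n$. Let $f=\mathbf{F}(j_1,\dots,j_s)$ be a proper face of $\mathcal{C}^n$ with $1\le|j_1|<\dots<|j_s|\le n$. Then the face family $\widehat f$ of $f$ in $\mathcal{F}_A$ consists of exactly $2^d$ faces, where $d=\mathrm{rank}_{\mathbb{Z}_2}\big(\widetilde A^{|j_1|\cdots|j_s|}_{|j_1|\cdots|j_s|}\big)$.
   Context: $[\pm n]=\{\pm1,\dots,\pm n\}$, $\mathcal{C}^n=\{x\in\mathbb{R}^n: -\tfrac14\le x_i\le\tfrac14\}$; $\mathbf{F}(i)$, $\mathbf{F}(-i)$ ($1\le i\le n$) are the facets in $\{x_i=\tfrac14\}$, $\{x_i=-\tfrac14\}$, and $\mathbf{F}(j_1,\dots,j_s)=\bigcap_i\mathbf{F}(j_i)$ for $j_i$ with distinct absolute values. Binary matrices have entries in $\mathbb{Z}_2$; $A^i_k$ denotes the $(i,k)$ entry viewed as $0$ or $1$. For $1\le a_1<\dots<a_s\le n$, $\widetilde A^{a_1\cdots a_s}_{a_1\cdots a_s}$ is the $s\times s$ principal submatrix of $\widetilde A$ on rows and columns $a_1,\dots,a_s$. $\mathcal{F}_A$ pairs $\mathbf{F}(j)$ with $\mathbf{F}(-j)$ via $\tau^A_j:\mathbf{F}(j)\to\mathbf{F}(-j)$, $\tau^A_j(x)=y$ with $y_{|j|}=-x_{|j|}$ and $y_k=(-1)^{A^{|j|}_k}x_k$ for $k\ne|j|$. A composition $\tau^A_{k_m}\circ\dots\circ\tau^A_{k_1}$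 applied to a proper face $f$ is valid if $f\subset\mathbf{F}(k_1)$ and $\tau^A_{k_i}\circ\dots\circ\tau^A_{k_1}(f)\subset\mathbf{F}(k_{i+1})$ for $1\le i<m$ ($m=0$ allowed). The face family $\widehat f$ is the set of faces $\tau^A_{k_m}\circ\dots\circ\tau^A_{k_1}(f)$ over all valid compositions. *)

theory Defs
  imports Main "HOL-Library.Z2" "Jordan_Normal_Form.DL_Rank_Submatrix"
begin

text \<open>Points of R^n are functions nat => real, coordinates 1..n, zero outside.
  Binary matrices are bit mat (entries in Z_2), 0-indexed: the paper's entry A^i_k is A $$ (i-1, k-1).\<close>

definition signed_idx :: "nat \<Rightarrow> int set" where
  "signed_idx n = {j. 1 \<le> \<bar>j\<bar> \<and> \<bar>j\<bar> \<le> int n}"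

definition cube :: "nat \<Rightarrow> (nat \<Rightarrow> real) set" where
  "cube n = {x. (\<forall>i\<in>{1..n}. -1/4 \<le> x i \<and> x i \<le> 1/4) \<and> (\<forall>i. i \<notin> {1..n} \<longrightarrow> x i = 0)}"

definition facet :: "nat \<Rightarrow> int \<Rightarrow> (nat \<Rightarrow> real) set" where
  "facet n j = {x \<in> cube n. x (nat \<bar>j\<bar>) = (if j > 0 then 1/4 else -1/4)}"

definition face :: "nat \<Rightarrow> int set \<Rightarrow> (nat \<Rightarrow> real) set" where
  "face n J = cube n \<inter> \<Inter> (facet n ` J)"

definition tau :: "nat \<Rightarrow> bit mat \<Rightarrow> int \<Rightarrow> (nat \<Rightarrow> real) \<Rightarrow> (nat \<Rightarrow> real)" where
  "tau n A j x = (\<lambda>k. if k = nat \<bar>j\<bar> then - x k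
      else if k \<in> {1..n} \<and> A $$ (nat \<bar>j\<bar> - 1, k - 1) = 1 then - x k else x k)"

text \<open>Applying the composition tau_{k_m} o ... o tau_{k_1} (list [k_1,...,k_m]) to a face.\<close>
fun apply_seq :: "nat \<Rightarrow> bit mat \<Rightarrow> (nat \<Rightarrow> real) set \<Rightarrow> int list \<Rightarrow> (nat \<Rightarrow> real) set" where
  "apply_seq n A f [] = f"
| "apply_seq n A f (k # ks) = apply_seq n A (tau n A k ` f) ks"

fun valid_seq :: "nat \<Rightarrow> bit mat \<Rightarrow> (nat \<Rightarrow> real) set \<Rightarrow> int list \<Rightarrow> bool" where
  "valid_seq n A f [] = True"
| "valid_seq n A f (k # ks) = (k \<in> signed_idx n \<and> f \<subseteq> facet n k \<and> valid_seq n A (tau n A k ` f) ks)"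

definition face_family :: "nat \<Rightarrow> bit mat \<Rightarrow> (nat \<Rightarrow> real) set \<Rightarrow> (nat \<Rightarrow> real) set set" where
  "face_family n A f = {apply_seq n A f ks | ks. valid_seq n A f ks}"

end

theory Submission
  imports Defs
begin


lemma bit_cases: "(b::bit) = 0 \<or> b = 1" by (metis bit_not_zero_iff)
lemma UNIV_bit: "(UNIV :: bit set) = {0, 1}" using bit_cases by auto
lemma card_UNIV_bit: "card (UNIV :: bit set) = 2" unfolding UNIV_bit by simp
lemma bit_add_self[simp]: "(b::bit) + b = 0" using bit_cases[of b] by auto

lemma vec_add_self_bit: "(v :: bit vec) \<in> carrier_vec m \<Longrightarrow> v + v = 0\<^sub>v m"
  by (intro eq_vecI) auto

lemma vec_add_add_self_bit: "(v :: bit vec) \<in> carrier_vec m \<Longrightarrow> w \<in> carrier_vec m \<Longrightarrow> (v + w) + w = v"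
  by (intro eq_vecI) (auto simp: add.assoc)

lemma card_carrier_vec_bit: "card (carrier_vec m :: bit vec set) = 2 ^ m"
proof -
  let ?B = "{xs. set xs \<subseteq> (UNIV::bit set) \<and> length xs = m}"
  have i: "inj_on list_of_vec (carrier_vec m :: bit vec set)"
      by (rule inj_onI) (metis vec_list)
  have s: "list_of_vec ` (carrier_vec m :: bit vec set) = ?B"
  proof -
    have "xs \<in> list_of_vec ` (carrier_vec m :: bit vec set)" if "length xs = m" for xs :: "bit list"
    proof -
      have vc: "vec_of_list xs \<in> carrier_vec m" using that unfolding carrier_vec_def by simp
      have lv: "xs = list_of_vec (vec_of_list xs)" by (rule list_vec[symmetric])
      show ?thesis by (rule image_eqI[where f=list_of_vec, OF lv vc])
    qed
    then show ?thesis by auto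
  qed
  have "bij_betw list_of_vec (carrier_vec m :: bit vec set) ?B"
    unfolding bij_betw_def using i s by blast
  then have "card (carrier_vec m :: bit vec set) = card ?B" by (rule bij_betw_same_card)
  also have "\<dots> = 2 ^ m" proof - have "card ?B = card (UNIV::bit set)^m" by (rule card_lists_length_eq) (unfold UNIV_bit, simp) then show ?thesis using card_UNIV_bit by simp qed
  finally show ?thesis .
qed


lemma finite_carrier_vec_bit[simp]: "finite (carrier_vec m :: bit vec set)"
  by (rule card_ge_0_finite) (simp add: card_carrier_vec_bit)

definition kerS :: "bit mat \<Rightarrow> nat \<Rightarrow> bit vec set" where
  "kerS M m = {v \<in> carrier_vec m. M *\<^sub>v v = 0\<^sub>v m}"

definition chi :: "bit \<Rightarrow> int" where "chi b = (if b = 0 then 1 else -1)"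

lemma chi_add: "chi (a + b) = chi a * chi b"
  using bit_cases[of a] bit_cases[of b] by (auto simp: chi_def)

lemma charsum:
  assumes v: "(v :: bit vec) \<in> carrier_vec m"
  shows "(\<Sum>x\<in>carrier_vec m. chi (x \<bullet> v)) = (if v = 0\<^sub>v m then 2 ^ m else 0)"
proof (cases "v = 0\<^sub>v m")
  case True
  then show ?thesis by (simp add: chi_def card_carrier_vec_bit)
next
  case False
  then obtain i where i: "i < m" "v $ i \<noteq> 0" proof -
    have "\<not> (\<forall>i<m. v $ i = 0)"
    proof
      assume "\<forall>i<m. v $ i = 0"
      then have "v = 0\<^sub>v m" using v by (intro eq_vecI) auto
      with False show False by simp
    qed
    then show ?thesis using that by blast
  qed
  then have vi: "v $ i = 1" using bit_cases by auto
  let ?e = "unit_vec m i :: bit vec"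
  let ?C = "carrier_vec m :: bit vec set"
  have bij: "bij_betw (\<lambda>x. x + ?e) ?C ?C"
    by (rule bij_betwI[where g = "\<lambda>x. x + ?e"]) (auto simp: vec_add_add_self_bit)
  have "(\<Sum>x\<in>?C. chi (x \<bullet> v)) = (\<Sum>x\<in>?C. chi ((x + ?e) \<bullet> v))"
    using sum.reindex_bij_betw[OF bij, of "\<lambda>x. chi (x \<bullet> v)"] by simp
  also have "\<dots> = (\<Sum>x\<in>?C. - chi (x \<bullet> v))"
  proof (rule sum.cong[OF refl])
    fix x assume x: "x \<in> ?C"
    have "(x + ?e) \<bullet> v = x \<bullet> v + ?e \<bullet> v" using x v by (simp add: add_scalar_prod_distrib)
    also have "?e \<bullet> v = 1" using v i vi by simp
    finally show "chi ((x + ?e) \<bullet> v) = - chi (x \<bullet> v)" by (simp add: chi_add chi_def)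
  qed
  also have "\<dots> = - (\<Sum>x\<in>?C. chi (x \<bullet> v))" by (simp add: sum_negf)
  finally show ?thesis using False by simp
qed

lemma sum_if_card: "finite A \<Longrightarrow> (\<Sum>x\<in>A. if P x then (c::int) else 0) = c * int (card {x\<in>A. P x})"
  by (simp add: sum.If_cases[of A P] Int_def)

lemma card_kernel_transpose:
  assumes M: "(M :: bit mat) \<in> carrier_mat m m"
  shows "card (kerS M m) = card (kerS (transpose_mat M) m)"
proof -
  let ?C = "carrier_vec m :: bit vec set"
  have MT: "transpose_mat M \<in> carrier_mat m m" using M by simp
  have "(\<Sum>y\<in>?C. \<Sum>x\<in>?C. chi (x \<bullet> (M *\<^sub>v y))) = (\<Sum>y\<in>?C. if M *\<^sub>v y = 0\<^sub>v m then 2^m else 0)"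
    by (rule sum.cong[OF refl], rule charsum) (use M in auto)
  also have "\<dots> = 2^m * int (card (kerS M m))"
    using M by (simp add: sum_if_card kerS_def)
  finally have 1: "(\<Sum>y\<in>?C. \<Sum>x\<in>?C. chi (x \<bullet> (M *\<^sub>v y))) = 2^m * int (card (kerS M m))" .
  have "(\<Sum>x\<in>?C. \<Sum>y\<in>?C. chi (x \<bullet> (M *\<^sub>v y))) = (\<Sum>x\<in>?C. \<Sum>y\<in>?C. chi (y \<bullet> (transpose_mat M *\<^sub>v x)))"
  proof (intro sum.cong refl)
    fix x y assume x: "x \<in> ?C" and y: "y \<in> ?C"
    have "x \<bullet> (M *\<^sub>v y) = (transpose_mat M *\<^sub>v x) \<bullet> y"
      using transpose_vec_mult_scalar[OF M y x] by simp
    also have "\<dots> = y \<bullet> (transpose_mat M *\<^sub>v x)"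
      by (rule comm_scalar_prod[of _ m]) (use MT x y in auto)
    finally show "chi (x \<bullet> (M *\<^sub>v y)) = chi (y \<bullet> (transpose_mat M *\<^sub>v x))" by simp
  qed
  also have "\<dots> = (\<Sum>x\<in>?C. if transpose_mat M *\<^sub>v x = 0\<^sub>v m then 2^m else 0)"
    by (rule sum.cong[OF refl], rule charsum) (use MT in auto)
  also have "\<dots> = 2^m * int (card (kerS (transpose_mat M) m))"
    using M by (simp add: sum_if_card kerS_def)
  finally have 2: "(\<Sum>x\<in>?C. \<Sum>y\<in>?C. chi (x \<bullet> (M *\<^sub>v y))) = 2^m * int (card (kerS (transpose_mat M) m))" .
  from 1 2 sum.swap[of "\<lambda>x y. chi (x \<bullet> (M *\<^sub>v y))" ?C ?C] show ?thesis by simp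
qed


lemma bit_add_self2[simp]: "(a::bit) + (a + b) = b"
  using bit_cases[of a] bit_cases[of b] by auto

lemma vec_cancel_bit: "(x :: bit vec) \<in> carrier_vec m \<Longrightarrow> k \<in> carrier_vec m \<Longrightarrow> x + (x + k) = k"
  by (intro eq_vecI) auto

definition imS :: "bit mat \<Rightarrow> nat \<Rightarrow> bit vec set" where
  "imS M m = (\<lambda>x. M *\<^sub>v x) ` carrier_vec m"

lemma card_im_ker:
  assumes M: "(M :: bit mat) \<in> carrier_mat m m"
  shows "card (imS M m) * card (kerS M m) = 2 ^ m"
proof -
  let ?C = "carrier_vec m :: bit vec set"
  let ?g = "\<lambda>x. M *\<^sub>v x"
  have fib: "card {x. x \<in> ?C \<and> ?g x = w} = card (kerS M m)" if w: "w \<in> ?g ` ?C" for w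
  proof -
    obtain x0 where x0: "x0 \<in> ?C" "w = ?g x0" using w by blast
    have Mx0: "?g x0 \<in> carrier_vec m" using M x0 by simp
    have eq: "{x. x \<in> ?C \<and> ?g x = w} = (\<lambda>k. x0 + k) ` kerS M m"
    proof (intro equalityI subsetI)
      fix x assume x: "x \<in> {x. x \<in> ?C \<and> ?g x = w}"
      then have xc: "x \<in> ?C" and gx: "?g x = ?g x0" using x0 by auto
      have "?g (x0 + x) = ?g x0 + ?g x" using M x0 xc by (simp add: mult_add_distrib_mat_vec)
      also have "\<dots> = 0\<^sub>v m" using gx Mx0 by (simp add: vec_add_self_bit)
      finally have "x0 + x \<in> kerS M m" using x0 xc by (simp add: kerS_def)
      moreover have "x = x0 + (x0 + x)" using x0 xc by (simp add: vec_cancel_bit)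
      ultimately show "x \<in> (\<lambda>k. x0 + k) ` kerS M m" by blast
    next
      fix x assume "x \<in> (\<lambda>k. x0 + k) ` kerS M m"
      then obtain k where k: "k \<in> ?C" "?g k = 0\<^sub>v m" "x = x0 + k" by (auto simp: kerS_def)
      have "?g x = ?g x0 + ?g k" using M x0 k by (simp add: mult_add_distrib_mat_vec)
      also have "\<dots> = ?g x0" using k Mx0 by simp
      finally show "x \<in> {x. x \<in> ?C \<and> ?g x = w}" using x0 k by simp
    qed
    have inj: "inj_on (\<lambda>k. x0 + k) (kerS M m)"
    proof (rule inj_onI)
      fix k k' assume "k \<in> kerS M m" "k' \<in> kerS M m" "x0 + k = x0 + k'"
      then show "k = k'" using x0 vec_cancel_bit[of x0 m k] vec_cancel_bit[of x0 m k']
        by (metis (no_types, lifting) kerS_def mem_Collect_eq)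
    qed
    show ?thesis unfolding eq by (rule card_image[OF inj])
  qed
  have "2 ^ m = card ?C" by (simp add: card_carrier_vec_bit)
  also have "\<dots> = (\<Sum>x\<in>?C. 1)" by simp
  also have "\<dots> = (\<Sum>w\<in>?g ` ?C. \<Sum>x\<in>{x. x \<in> ?C \<and> ?g x = w}. 1)"
    by (rule sum.image_gen) simp
  also have "\<dots> = (\<Sum>w\<in>?g ` ?C. card (kerS M m))"
    by (rule sum.cong[OF refl]) (simp add: fib)
  also have "\<dots> = card (imS M m) * card (kerS M m)" by (simp add: imS_def)
  finally show ?thesis by simp
qed

lemma card_im_transpose:
  assumes M: "(M :: bit mat) \<in> carrier_mat m m"
  shows "card (imS (transpose_mat M) m) = card (imS M m)"
proof -
  have MT: "transpose_mat M \<in> carrier_mat m m" using M by simp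
  have k0: "card (kerS M m) > 0"
  proof -
    have "finite (kerS M m)" by (simp add: kerS_def)
    moreover have "M *\<^sub>v 0\<^sub>v m = 0\<^sub>v m" using M by (intro eq_vecI) auto
    then have "0\<^sub>v m \<in> kerS M m" using M by (simp add: kerS_def)
    ultimately show ?thesis by (metis card_gt_0_iff empty_iff)
  qed
  have "card (imS (transpose_mat M) m) * card (kerS M m) = card (imS M m) * card (kerS M m)"
    using card_im_ker[OF M] card_im_ker[OF MT] card_kernel_transpose[OF M] by simp
  then show ?thesis using k0 by simp
qed


lemma (in vectorspace) card_carrier_from_basis:
  assumes fB: "finite B" and bB: "basis B"
  shows "card (carrier V) = card (carrier K) ^ card B"
proof -
  from bB have li: "lin_indpt B" and gen: "span B = carrier V" and BC: "B \<subseteq> carrier V"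
    by (auto simp: basis_def)
  let ?F = "B \<rightarrow>\<^sub>E carrier K"
  have inj: "inj_on (\<lambda>a. lincomb a B) ?F"
  proof (rule inj_onI)
    fix a b assume a: "a \<in> ?F" and b: "b \<in> ?F" and eq: "lincomb a B = lincomb b B"
    have aF: "a \<in> B \<rightarrow> carrier K" and bF: "b \<in> B \<rightarrow> carrier K" using a b by auto
    have "lincomb (\<lambda>v. a v \<ominus>\<^bsub>K\<^esub> b v) B = lincomb a B \<ominus>\<^bsub>V\<^esub> lincomb b B"
      by (rule lincomb_diff[OF fB BC aF bF])
    also have "\<dots> = \<zero>\<^bsub>V\<^esub>" using eq lincomb_closed[OF BC bF] by (simp add: M.minus_eq M.r_neg)
    finally have z: "lincomb (\<lambda>v. a v \<ominus>\<^bsub>K\<^esub> b v) B = \<zero>\<^bsub>V\<^esub>" .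
    have cF: "(\<lambda>v. a v \<ominus>\<^bsub>K\<^esub> b v) \<in> B \<rightarrow> carrier K" using aF bF by auto
    have "a v = b v" if v: "v \<in> B" for v
    proof -
      have "a v \<ominus>\<^bsub>K\<^esub> b v = \<zero>\<^bsub>K\<^esub>"
      proof (rule ccontr)
        assume "a v \<ominus>\<^bsub>K\<^esub> b v \<noteq> \<zero>\<^bsub>K\<^esub>"
        then have "lin_dep B" by (intro lin_dep_crit[OF fB subset_refl cF v _ z])
        with li show False by simp
      qed
      moreover have "a v \<in> carrier K" "b v \<in> carrier K" using aF bF v by auto
      ultimately show ?thesis
        by (metis R.add.inv_closed R.minus_eq R.add.inv_equality R.minus_minus)
    qed
    then show "a = b" using a b by (intro PiE_ext) auto
  qed
  have im: "(\<lambda>a. lincomb a B) ` ?F = carrier V"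
  proof (intro equalityI subsetI)
    fix v assume "v \<in> (\<lambda>a. lincomb a B) ` ?F"
    then obtain a where "a \<in> ?F" "v = lincomb a B" by blast
    then show "v \<in> carrier V" using lincomb_closed[OF BC] by auto
  next
    fix v assume "v \<in> carrier V"
    then have "v \<in> span B" using gen by simp
    then obtain a where a: "a \<in> B \<rightarrow> carrier K" "v = lincomb a B"
      using finite_span[OF fB BC] by blast
    have "lincomb (restrict a B) B = lincomb a B"
      by (rule lincomb_cong[OF refl BC]) (use a in auto)
    moreover have "restrict a B \<in> ?F" using a by auto
    ultimately show "v \<in> (\<lambda>a. lincomb a B) ` ?F" using a by (metis image_eqI)
  qed
  have "card (carrier V) = card ?F" using card_image[OF inj] im by simp
  also have "\<dots> = card (carrier K) ^ card B" by (simp add: card_PiE fB)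
  finally show ?thesis .
qed


lemma card_im_rank:
  assumes M: "(M :: bit mat) \<in> carrier_mat m m"
  shows "card (imS M m) = 2 ^ vec_space.rank m M"
proof -
  interpret vs: vec_space "TYPE(bit)" m .
  let ?W = "vs.span (set (cols M))"
  have cs: "set (cols M) \<subseteq> carrier_vec m" using M cols_dim by blast
  have vW: "vectorspace class_ring (vs.vs ?W)"
    using cs vs.span_is_subspace vs.subspace_is_vs by simp
  have fd: "vectorspace.fin_dim class_ring (vs.vs ?W)" by (rule vs.fin_dim_span_cols[OF M])
  obtain B where B: "finite B" "vectorspace.basis class_ring (vs.vs ?W) B"
    using vectorspace.finite_basis_exists[OF vW fd] by blast
  have "card ?W = card (carrier (class_ring :: bit ring)) ^ card B"
    using vectorspace.card_carrier_from_basis[OF vW B] by simp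
  also have "card B = vs.rank M"
    unfolding vs.rank_def using vectorspace.dim_basis[OF vW B] by simp
  finally have 1: "card ?W = card (carrier (class_ring :: bit ring)) ^ vs.rank M" .
  have cK: "card (carrier (class_ring :: bit ring)) = 2" using card_UNIV_bit by simp
  note 1 = 1[unfolded cK]
  have eq: "?W = imS M m"
    using vs.col_space_eq[OF M] M unfolding vs.col_space_def imS_def by auto
  show ?thesis using 1 unfolding eq .
qed



definition sg :: "bit \<Rightarrow> real" where "sg b = (if b = 0 then 1/4 else -1/4)"

lemma sg_plus1: "sg (b + 1) = - sg b" using bit_cases[of b] by (auto simp: sg_def)
lemma sg_range: "sg b = 1/4 \<or> sg b = -1/4" by (simp add: sg_def)

definition FV :: "nat \<Rightarrow> (nat \<Rightarrow> nat) \<Rightarrow> nat \<Rightarrow> bit vec \<Rightarrow> (nat \<Rightarrow> real) set" where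
  "FV n p m v = {x \<in> cube n. \<forall>a<m. x (p a) = sg (v $ a)}"

lemma tau_tau: "tau n A k (tau n A k x) = x"
  unfolding tau_def by (rule ext) auto

lemma tau_cube:
  assumes "x \<in> cube n" "k \<in> signed_idx n"
  shows "tau n A k x \<in> cube n"
proof -
  have k: "1 \<le> nat \<bar>k\<bar>" "nat \<bar>k\<bar> \<le> n" using assms(2) by (auto simp: signed_idx_def)
  show ?thesis using assms(1) k unfolding cube_def tau_def by auto
qed

locale fsetup =
  fixes n :: nat and A :: "bit mat" and J :: "int set"
  assumes A: "A \<in> carrier_mat n n" and diag: "\<forall>i<n. A $$ (i,i) = 0"
    and Jsub: "J \<subseteq> signed_idx n" and injJ: "inj_on abs J"
begin

definition "I = (\<lambda>j. nat \<bar>j\<bar> - 1) ` J"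
definition "m = card J"
definition "p a = pick I a + 1"
definition "M = submatrix (A + 1\<^sub>m n) I I"

lemma finJ: "finite J"
proof -
  have "signed_idx n \<subseteq> {- int n .. int n}" by (auto simp: signed_idx_def)
  then have "J \<subseteq> {- int n .. int n}" using Jsub by (rule subset_trans[rotated])
  then show ?thesis by (rule finite_subset) simp
qed

lemma inj_I: "inj_on (\<lambda>j. nat \<bar>j\<bar> - 1) J"
proof (rule inj_onI)
  fix j j' assume j: "j \<in> J" "j' \<in> J" "nat \<bar>j\<bar> - 1 = nat \<bar>j'\<bar> - 1"
  then have "1 \<le> \<bar>j\<bar>" "1 \<le> \<bar>j'\<bar>" using Jsub by (auto simp: signed_idx_def)
  then have "\<bar>j\<bar> = \<bar>j'\<bar>" using j(3) by linarith
  then show "j = j'" using injJ j(1,2) unfolding inj_on_def by blast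
qed

lemma card_I: "card I = m"
  unfolding I_def m_def by (rule card_image[OF inj_I])

lemma finI: "finite I" unfolding I_def using finJ by simp

lemma I_sub: "I \<subseteq> {..<n}"
proof
  fix i assume "i \<in> I"
  then obtain j where j: "j \<in> J" "i = nat \<bar>j\<bar> - 1" unfolding I_def by blast
  then have "1 \<le> \<bar>j\<bar>" "\<bar>j\<bar> \<le> int n" using Jsub unfolding signed_idx_def by auto
  then show "i \<in> {..<n}" using j(2) by simp
qed

lemma pick_I: "a < m \<Longrightarrow> pick I a \<in> I"
  using card_I by (intro pick_in_set) auto

lemma pick_lt: "a < m \<Longrightarrow> pick I a < n"
  using pick_I I_sub by auto

lemma pick_less: "a < b \<Longrightarrow> b < m \<Longrightarrow> pick I a < pick I b"
  by (rule pick_mono) (use card_I in auto)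

lemma pick_inj: "a < m \<Longrightarrow> b < m \<Longrightarrow> pick I a = pick I b \<Longrightarrow> a = b"
  using pick_less[of a b] pick_less[of b a] by (cases a b rule: linorder_cases) auto

lemma pick_surj: "i \<in> I \<Longrightarrow> \<exists>a<m. pick I a = i"
proof -
  assume i: "i \<in> I"
  have "{a\<in>I. a < i} \<subset> I" using i by auto
  then have "card {a\<in>I. a < i} < card I" using finI by (rule psubset_card_mono[rotated])
  then have "card {a\<in>I. a < i} < m" using card_I by simp
  then show ?thesis using pick_card_in_set[OF i] by blast
qed

lemma p_range: "a < m \<Longrightarrow> 1 \<le> p a \<and> p a \<le> n"
  using pick_lt[of a] by (auto simp: p_def Suc_le_eq)

lemma p_inj: "a < m \<Longrightarrow> b < m \<Longrightarrow> p a = p b \<Longrightarrow> a = b"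
  using pick_inj by (auto simp: p_def)

lemma setI: "{i. i < dim_row (A + 1\<^sub>m n) \<and> i \<in> I} = I" "{i. i < dim_col (A + 1\<^sub>m n) \<and> i \<in> I} = I"
  using I_sub A by auto

lemma M_carrier: "M \<in> carrier_mat m m"
  unfolding M_def carrier_mat_def using dim_submatrix[of "A + 1\<^sub>m n" I I] setI card_I by simp

lemma M_index: "c < m \<Longrightarrow> a < m \<Longrightarrow> M $$ (c, a) = A $$ (p c - 1, p a - 1) + (if c = a then 1 else 0)"
proof -
  assume c: "c < m" and a: "a < m"
  have "M $$ (c, a) = (A + 1\<^sub>m n) $$ (pick I c, pick I a)"
    unfolding M_def by (rule submatrix_index) (use c a setI card_I in auto)
  also have "\<dots> = A $$ (pick I c, pick I a) + (if c = a then 1 else 0)"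
    using A pick_lt[OF c] pick_lt[OF a] pick_inj[OF c a] by auto
  finally show ?thesis by (simp add: p_def)
qed

lemma M_index_diag: "c < m \<Longrightarrow> M $$ (c, c) = 1"
  using M_index[of c c] diag pick_lt[of c] by (simp add: p_def)

lemma M_index_off: "c < m \<Longrightarrow> a < m \<Longrightarrow> c \<noteq> a \<Longrightarrow> M $$ (c, a) = A $$ (p c - 1, p a - 1)"
  using M_index by simp

definition "FF v = FV n p m v"

definition "wit v = (\<lambda>i. if \<exists>a<m. p a = i then sg (v $ (THE a. a < m \<and> p a = i)) else 0)"

lemma wit_p: "a < m \<Longrightarrow> wit v (p a) = sg (v $ a)"
proof -
  assume a: "a < m"
  have "(THE b. b < m \<and> p b = p a) = a"
    using a p_inj by (intro the_equality) auto
  then show ?thesis using a unfolding wit_def by auto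
qed

lemma wit_other: "(\<forall>a<m. p a \<noteq> i) \<Longrightarrow> wit v i = 0"
  unfolding wit_def by auto

lemma wit_FF: "wit v \<in> FF v"
proof -
  have "wit v \<in> cube n"
    unfolding cube_def
  proof (intro CollectI conjI ballI allI impI)
    fix i assume "i \<in> {1..n}"
    show "- 1 / 4 \<le> wit v i" "wit v i \<le> 1 / 4"
      unfolding wit_def using sg_range by (auto simp: sg_def)
  next
    fix i assume "i \<notin> {1..n}"
    then show "wit v i = 0" using p_range by (intro wit_other) fastforce
  qed
  then show ?thesis unfolding FF_def FV_def using wit_p by auto
qed

lemma FF_inj: "inj_on FF (carrier_vec m)"
proof (rule inj_onI)
  fix v w assume v: "v \<in> carrier_vec m" and w: "w \<in> carrier_vec m" and eq: "FF v = FF w"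
  show "v = w"
  proof (rule eq_vecI)
    fix a assume "a < dim_vec w"
    then have a: "a < m" using w by simp
    have "wit v \<in> FF w" using wit_FF[of v] unfolding eq .
    then have "wit v (p a) = sg (w $ a)" using a unfolding FF_def FV_def by auto
    then have "sg (v $ a) = sg (w $ a)" using wit_p[OF a] by simp
    then show "v $ a = w $ a" using bit_cases[of "v $ a"] bit_cases[of "w $ a"] by (auto simp: sg_def)
  qed (use v w in simp)
qed

lemma valid_step:
  assumes k: "k \<in> signed_idx n" and sub: "FF v \<subseteq> facet n k"
  shows "\<exists>c<m. nat \<bar>k\<bar> = p c"
proof -
  have "wit v \<in> facet n k" using wit_FF sub by blast
  then have "wit v (nat \<bar>k\<bar>) \<noteq> 0" unfolding facet_def by auto
  then show ?thesis using wit_other by metis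
qed

lemma step_valid:
  assumes v: "v \<in> carrier_vec m" and c: "c < m"
  defines "k \<equiv> (if v $ c = 0 then int (p c) else - int (p c))"
  shows "k \<in> signed_idx n" "nat \<bar>k\<bar> = p c" "FF v \<subseteq> facet n k"
proof -
  show "k \<in> signed_idx n" using p_range[OF c] unfolding k_def signed_idx_def by auto
  show "nat \<bar>k\<bar> = p c" unfolding k_def by auto
  show "FF v \<subseteq> facet n k"
  proof
    fix x assume "x \<in> FF v"
    then have "x \<in> cube n" "x (p c) = sg (v $ c)" using c unfolding FF_def FV_def by auto
    moreover have "p c \<ge> 1" using p_range[OF c] by simp
    ultimately show "x \<in> facet n k" unfolding facet_def k_def sg_def by auto
  qed
qed

lemma tau_FF:
  assumes k: "k \<in> signed_idx n" and kc: "nat \<bar>k\<bar> = p c" and c: "c < m" and v: "v \<in> carrier_vec m"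
    and x: "x \<in> FF v"
  shows "tau n A k x \<in> FF (v + row M c)"
proof -
  have xc: "x \<in> cube n" and xv: "\<And>a. a < m \<Longrightarrow> x (p a) = sg (v $ a)"
    using x unfolding FF_def FV_def by auto
  have "tau n A k x (p a) = sg ((v + row M c) $ a)" if a: "a < m" for a
  proof -
    have h1: "(v + row M c) $ a = v $ a + row M c $ a" using v a M_carrier by simp
    have h2: "row M c $ a = M $$ (c, a)" using a c M_carrier by simp
    have idx: "(v + row M c) $ a = v $ a + M $$ (c, a)" by (simp only: h1 h2)
    show ?thesis
    proof (cases "a = c")
      case True
      then show ?thesis using idx M_index_diag[OF c] xv[OF a] kc
        by (simp add: tau_def sg_plus1 sg_def)
    next
      case False
      then have pne: "p a \<noteq> nat \<bar>k\<bar>" using kc p_inj a c by metis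
      have "p a \<in> {1..n}" using p_range[OF a] by simp
      then have "tau n A k x (p a) = (if A $$ (p c - 1, p a - 1) = 1 then - x (p a) else x (p a))"
        using pne kc unfolding tau_def by auto
      then show ?thesis using idx M_index_off[OF c a] False xv[OF a] bit_cases[of "A $$ (p c - 1, p a - 1)"]
        by (auto simp: sg_plus1 sg_def)
    qed
  qed
  then show ?thesis using tau_cube[OF xc k] unfolding FF_def FV_def by auto
qed

lemma row_carrier': "c < m \<Longrightarrow> row M c \<in> carrier_vec m"
  using M_carrier by auto

lemma tau_image:
  assumes k: "k \<in> signed_idx n" and kc: "nat \<bar>k\<bar> = p c" and c: "c < m" and v: "v \<in> carrier_vec m"
  shows "tau n A k ` FF v = FF (v + row M c)"
proof (intro equalityI subsetI)
  fix y assume "y \<in> tau n A k ` FF v"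
  then show "y \<in> FF (v + row M c)" using tau_FF[OF k kc c v] by blast
next
  fix y assume y: "y \<in> FF (v + row M c)"
  have "v + row M c + row M c = v" using vec_add_add_self_bit[OF v row_carrier'[OF c]] .
  then have "tau n A k y \<in> FF v"
    using tau_FF[OF k kc c _ y] v row_carrier'[OF c] by simp
  moreover have "y = tau n A k (tau n A k y)" by (rule tau_tau[symmetric])
  ultimately show "y \<in> tau n A k ` FF v" by (intro image_eqI[where f="tau n A k"])
qed

end


lemma apply_seq_append: "apply_seq n A f (xs @ ys) = apply_seq n A (apply_seq n A f xs) ys"
  by (induction xs arbitrary: f) auto

lemma valid_seq_append: "valid_seq n A f (xs @ ys) = (valid_seq n A f xs \<and> valid_seq n A (apply_seq n A f xs) ys)"
  by (induction xs arbitrary: f) auto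

context fsetup
begin

definition "v0 = vec m (\<lambda>a. if int (p a) \<in> J then 0 else (1::bit))"

lemma v0_carrier: "v0 \<in> carrier_vec m" unfolding v0_def by simp

lemma p_in_J: "a < m \<Longrightarrow> \<exists>j\<in>J. nat \<bar>j\<bar> = p a"
proof -
  assume a: "a < m"
  then obtain j where j: "j \<in> J" "pick I a = nat \<bar>j\<bar> - 1" using pick_I[OF a] unfolding I_def by blast
  then have "1 \<le> \<bar>j\<bar>" using Jsub unfolding signed_idx_def by auto
  then have "nat \<bar>j\<bar> = p a" using j(2) unfolding p_def by simp
  then show ?thesis using j(1) by blast
qed

lemma J_in_p: "j \<in> J \<Longrightarrow> \<exists>a<m. p a = nat \<bar>j\<bar>"
proof -
  assume j: "j \<in> J"
  then have "nat \<bar>j\<bar> - 1 \<in> I" unfolding I_def by blast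
  then obtain a where a: "a < m" "pick I a = nat \<bar>j\<bar> - 1" using pick_surj by blast
  have "1 \<le> \<bar>j\<bar>" using j Jsub unfolding signed_idx_def by auto
  then have "p a = nat \<bar>j\<bar>" using a(2) unfolding p_def by simp
  then show ?thesis using a(1) by blast
qed

lemma sign_J:
  assumes j: "j \<in> J" and a: "a < m" and ja: "nat \<bar>j\<bar> = p a"
  shows "(if 0 < j then 1/4 else -1/4) = sg (v0 $ a)"
proof -
  have pa: "1 \<le> p a" using p_range[OF a] by simp
  have "(0 < j) = (int (p a) \<in> J)"
  proof
    assume "0 < j"
    then have "j = int (p a)" using ja by simp
    then show "int (p a) \<in> J" using j by simp
  next
    assume pJ: "int (p a) \<in> J"
    have "\<bar>int (p a)\<bar> = \<bar>j\<bar>" using ja by simp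
    then have "int (p a) = j" using injJ pJ j unfolding inj_on_def by blast
    then show "0 < j" using pa by simp
  qed
  then show ?thesis using a unfolding v0_def sg_def by auto
qed

lemma face_eq: "face n J = FF v0"
proof (intro equalityI subsetI)
  fix x assume x: "x \<in> face n J"
  then have xc: "x \<in> cube n" and xf: "\<And>j. j \<in> J \<Longrightarrow> x \<in> facet n j"
    unfolding face_def by auto
  have "x (p a) = sg (v0 $ a)" if a: "a < m" for a
  proof -
    obtain j where j: "j \<in> J" "nat \<bar>j\<bar> = p a" using p_in_J[OF a] by blast
    have "x (nat \<bar>j\<bar>) = (if 0 < j then 1/4 else -1/4)" using xf[OF j(1)] unfolding facet_def by auto
    then show ?thesis using sign_J[OF j(1) a j(2)] j(2) by simp
  qed
  then show "x \<in> FF v0" using xc unfolding FF_def FV_def by auto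
next
  fix x assume x: "x \<in> FF v0"
  then have xc: "x \<in> cube n" and xv: "\<And>a. a < m \<Longrightarrow> x (p a) = sg (v0 $ a)"
    unfolding FF_def FV_def by auto
  have "x \<in> facet n j" if j: "j \<in> J" for j
  proof -
    obtain a where a: "a < m" "p a = nat \<bar>j\<bar>" using J_in_p[OF j] by blast
    have "x (nat \<bar>j\<bar>) = (if 0 < j then 1/4 else -1/4)"
      using xv[OF a(1)] sign_J[OF j a(1) a(2)[symmetric]] a(2) by simp
    then show ?thesis using xc unfolding facet_def by auto
  qed
  then show "x \<in> face n J" using xc unfolding face_def by auto
qed

lemma MT_carrier: "transpose_mat M \<in> carrier_mat m m" using M_carrier by simp

lemma MT_unit: "c < m \<Longrightarrow> transpose_mat M *\<^sub>v unit_vec m c = row M c"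
  using M_carrier by (intro eq_vecI) auto

lemma MT_zero: "transpose_mat M *\<^sub>v 0\<^sub>v m = 0\<^sub>v m"
  using M_carrier by (intro eq_vecI) auto

lemma reach1:
  "valid_seq n A (FF v) ks \<Longrightarrow> v \<in> carrier_vec m \<Longrightarrow>
    \<exists>x\<in>carrier_vec m. apply_seq n A (FF v) ks = FF (v + transpose_mat M *\<^sub>v x)"
proof (induction ks arbitrary: v)
  case Nil
  then show ?case using MT_zero by (intro bexI[of _ "0\<^sub>v m"]) auto
next
  case (Cons k ks)
  then have k: "k \<in> signed_idx n" and sub: "FF v \<subseteq> facet n k"
    and val: "valid_seq n A (tau n A k ` FF v) ks" by auto
  obtain c where c: "c < m" "nat \<bar>k\<bar> = p c" using valid_step[OF k sub] by blast
  have img: "tau n A k ` FF v = FF (v + row M c)" by (rule tau_image[OF k c(2) c(1) Cons.prems(2)])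
  have vc: "v + row M c \<in> carrier_vec m" using Cons.prems(2) row_carrier'[OF c(1)] by simp
  obtain x' where x': "x' \<in> carrier_vec m"
    "apply_seq n A (FF (v + row M c)) ks = FF (v + row M c + transpose_mat M *\<^sub>v x')"
    using Cons.IH[OF _ vc] val img by auto
  let ?x = "x' + unit_vec m c"
  have "transpose_mat M *\<^sub>v ?x = transpose_mat M *\<^sub>v x' + row M c"
    using MT_carrier x'(1) MT_unit[OF c(1)] by (simp add: mult_add_distrib_mat_vec)
  moreover have "v + row M c + transpose_mat M *\<^sub>v x' = v + (transpose_mat M *\<^sub>v x' + row M c)"
    using Cons.prems(2) row_carrier'[OF c(1)] MT_carrier x'(1)
    by (metis assoc_add_vec comm_add_vec mult_mat_vec_carrier)
  ultimately have "apply_seq n A (FF v) (k # ks) = FF (v + transpose_mat M *\<^sub>v ?x)"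
    using x'(2) img by simp
  moreover have "?x \<in> carrier_vec m" using x'(1) by simp
  ultimately show ?case by blast
qed

lemma reach2:
  assumes v: "v \<in> carrier_vec m" and x: "x \<in> carrier_vec m"
  shows "\<exists>ks. valid_seq n A (FF v) ks \<and> apply_seq n A (FF v) ks = FF (v + transpose_mat M *\<^sub>v x)"
proof -
  define xk where "xk k = vec m (\<lambda>a. if a < k then x $ a else 0)" for k
  have xkc: "xk k \<in> carrier_vec m" for k unfolding xk_def by simp
  have "\<exists>ks. valid_seq n A (FF v) ks \<and> apply_seq n A (FF v) ks = FF (v + transpose_mat M *\<^sub>v xk k)"
    if "k \<le> m" for k
    using that
  proof (induction k)
    case 0
    have "xk 0 = 0\<^sub>v m" unfolding xk_def by auto
    then show ?case using MT_zero v by (intro exI[of _ "[]"]) auto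
  next
    case (Suc k)
    then obtain ks where ks: "valid_seq n A (FF v) ks"
      "apply_seq n A (FF v) ks = FF (v + transpose_mat M *\<^sub>v xk k)" by auto
    have k: "k < m" using Suc.prems by simp
    let ?w = "v + transpose_mat M *\<^sub>v xk k"
    have wc: "?w \<in> carrier_vec m" using v MT_carrier xkc by simp
    show ?case
    proof (cases "x $ k = 0")
      case True
      then have "xk (Suc k) = xk k" unfolding xk_def by (intro eq_vecI) (auto simp: less_Suc_eq)
      then show ?thesis using ks by auto
    next
      case False
      then have xk1: "x $ k = 1" using bit_cases by auto
      have xkS: "xk (Suc k) = xk k + unit_vec m k"
        unfolding xk_def using xk1 by (intro eq_vecI) (auto simp: less_Suc_eq unit_vec_def)
      define k' where "k' = (if ?w $ k = 0 then int (p k) else - int (p k))"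
      have sv: "k' \<in> signed_idx n" "nat \<bar>k'\<bar> = p k" "FF ?w \<subseteq> facet n k'"
        using step_valid[OF wc k] unfolding k'_def by auto
      have img: "tau n A k' ` FF ?w = FF (?w + row M k)" by (rule tau_image[OF sv(1) sv(2) k wc])
      have "transpose_mat M *\<^sub>v xk (Suc k) = transpose_mat M *\<^sub>v xk k + row M k"
        unfolding xkS using MT_carrier xkc MT_unit[OF k] by (simp add: mult_add_distrib_mat_vec)
      then have eq: "v + transpose_mat M *\<^sub>v xk (Suc k) = ?w + row M k"
        using v MT_carrier xkc row_carrier'[OF k] by simp
      have "valid_seq n A (FF v) (ks @ [k'])" using ks sv by (simp add: valid_seq_append)
      moreover have "apply_seq n A (FF v) (ks @ [k']) = FF (v + transpose_mat M *\<^sub>v xk (Suc k))"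
        using ks img eq by (simp add: apply_seq_append)
      ultimately show ?thesis by blast
    qed
  qed
  moreover have "xk m = x" unfolding xk_def using x by (intro eq_vecI) auto
  ultimately show ?thesis by auto
qed

lemma family_eq: "face_family n A (FF v0) = FF ` ((\<lambda>y. v0 + y) ` imS (transpose_mat M) m)"
proof (intro equalityI subsetI)
  fix F assume "F \<in> face_family n A (FF v0)"
  then obtain ks where ks: "valid_seq n A (FF v0) ks" "F = apply_seq n A (FF v0) ks"
    unfolding face_family_def by blast
  obtain x where "x \<in> carrier_vec m" "F = FF (v0 + transpose_mat M *\<^sub>v x)"
    using reach1[OF ks(1) v0_carrier] ks(2) by blast
  then show "F \<in> FF ` ((\<lambda>y. v0 + y) ` imS (transpose_mat M) m)" unfolding imS_def by blast
next
  fix F assume "F \<in> FF ` ((\<lambda>y. v0 + y) ` imS (transpose_mat M) m)"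
  then obtain x where x: "x \<in> carrier_vec m" "F = FF (v0 + transpose_mat M *\<^sub>v x)"
    unfolding imS_def by blast
  obtain ks where "valid_seq n A (FF v0) ks" "apply_seq n A (FF v0) ks = F"
    using reach2[OF v0_carrier x(1)] x(2) by blast
  then show "F \<in> face_family n A (FF v0)" unfolding face_family_def by blast
qed

lemma family_card:
  "finite (face_family n A (face n J)) \<and> card (face_family n A (face n J)) = 2 ^ vec_space.rank m M"
proof -
  let ?R = "(\<lambda>y. v0 + y) ` imS (transpose_mat M) m"
  have imc: "imS (transpose_mat M) m \<subseteq> carrier_vec m" unfolding imS_def using MT_carrier by auto
  have Rc: "?R \<subseteq> carrier_vec m" using imc v0_carrier by auto
  have fin: "finite (imS (transpose_mat M) m)" unfolding imS_def by simp
  have injT: "inj_on (\<lambda>y. v0 + y) (imS (transpose_mat M) m)"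
  proof (rule inj_onI)
    fix y y' assume "y \<in> imS (transpose_mat M) m" "y' \<in> imS (transpose_mat M) m" "v0 + y = v0 + y'"
    then show "y = y'" using imc vec_cancel_bit[OF v0_carrier, of y] vec_cancel_bit[OF v0_carrier, of y'] by auto
  qed
  have "card (FF ` ?R) = card ?R" by (rule card_image[OF inj_on_subset[OF FF_inj Rc]])
  also have "\<dots> = card (imS (transpose_mat M) m)" by (rule card_image[OF injT])
  also have "\<dots> = card (imS M m)" by (rule card_im_transpose[OF M_carrier])
  also have "\<dots> = 2 ^ vec_space.rank m M" by (rule card_im_rank[OF M_carrier])
  finally show ?thesis using face_eq family_eq fin by simp
qed

end

theorem mainTheorem11:
  fixes n :: nat and A :: "bit mat" and J :: "int set"
  assumes "A \<in> carrier_mat n n"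
    and "\<forall>i<n. A $$ (i, i) = 0"
    and "J \<noteq> {}" and "J \<subseteq> signed_idx n" and "inj_on abs J"
  shows "finite (face_family n A (face n J)) \<and>
    card (face_family n A (face n J)) =
      2 ^ vec_space.rank (card J)
        (submatrix (A + 1\<^sub>m n) ((\<lambda>j. nat \<bar>j\<bar> - 1) ` J) ((\<lambda>j. nat \<bar>j\<bar> - 1) ` J))"
proof -
  interpret fsetup n A J using assms by unfold_locales auto
  show ?thesis using family_card unfolding m_def M_def I_def .
qed


end
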